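(* Let $A$ be an associative algebra and $BA$ its bar construction. Define operators $i':\hat X(BA)\to \hat X^2(BA)$, $r':\hat X^2(BA)\to \hat X(BA)$ and $h':\hat X^2(BA)\to \hat X^2(BA)$ (the latter odd) by $i'=I$ (the natural inclusion), $r'(\omega_0+\omega_2+\omega_1)=\omega_0+\theta\omega_1$ and $h'(\omega_0+\omega_2+\omega_1)=\nabla\omega_2$. Then $(r',h',i')$ is a special deformation retract of the supercomplex $(\hat X^2(BA),b)$ onto the supercomplex $(\hat X(BA),b)$, i.e. $r'i'=1$, $i'r'=1+bh'+h'b$ and $h'i'=0$.
   Context: Bar construction: for an associative algebra $A$, $BA=\bigoplus_{n\ge0}A^{\otimes n}$ is the tensor coalgebra (deconcatenation coproduct $\Delta(a_1,\dots,a_n)=\sum_i (a_1,\dots,a_i)\otimes(a_{i+1},\dots,a_n)$, counit $\eta$ the projection to $A^{\otimes 0}=k$) with differential $b'(a_1,\dots,a_n)=(-1)^n\sum_{i=1}^{n-1}(-1)^{i-1}(a_1,\dots,a_ia_{i+1},\dots,a_n)$; it is a DG coalgebra. Put $\bar BA=\ker\eta=\bigoplus_{n\ge1}A^{\otimes n}$. Universal codifferential forms: for a DG coalgebra $C$ with counit $\eta$ and $\bar C=\ker\eta$, $\Omega C$ is the DG coalgebra of universal codifferential forms (the coalgebra dual of the Cuntz–Quillen algebra of universal differential forms), with $\Omega^nC=C\otimes\bar C^{\otimes n}$, codifferential $d$, Hochschild-type operator $b:\Omega^\bullet C\to\Omega^{\bullet+1}C$, number operator $N$ (multiplication by form degree);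 $\natural$ denotes the cocommutator subspace, and $\dot\Omega^1C$ denotes the degree-one part of $\Omega^{norm}C=\ker((b+dN)^2)$; $\Omega^1C_\natural\subset\dot\Omega^1C$. The $X$-complex $X(C)$ is the $\mathbb Z/2$-graded (super)complex $C\rightleftarrows\Omega^1C_\natural$ with maps $b$ (from $C$) and $d$ (back), and $X^2(C)$ is $C\oplus\Omega^2C_\natural\rightleftarrows\dot\Omega^1C$ with maps $b+2d$ and $b+d$. These are bicomplexes whose horizontal differential $\partial_1$ is built from $b,d$ and whose vertical differential $\partial_2$ is induced by the internal differential of $C$; $\hat X(C)$, $\hat X^2(C)$ denote the total supercomplexes. Elements of $\hat X(C)$ are written $\omega_0+\omega_1$ ($\omega_0\in C$, $\omega_1\in\Omega^1C_\natural$) and of $\hat X^2(C)$ as $\omega_0+\omega_2+\omega_1$ ($\omega_0\in C$, $\omega_2\in\Omega^2C_\natural$, $\omega_1\in\dot\Omega^1C$). $I:\hat X(C)\to\hat X^2(C)$ is induced by the inclusions $C\to C\oplus\Omega^2C_\natural$, $\Omega^1C_\natural\to\dot\Omega^1C$. "$(\hat X^2(BA),b)$" denotes the supercomplex with differential given only by the $b$-parts. For $C=BA$: $\Omega^1BA=BA\otimes\bar BA\cong BA\otimes A\otimes BA$, $\Omega^1BA_\natural\cong A\otimes BA$, $\Omega^2BA=BA\otimes\bar BA\otimes\bar BA$. The map $\theta:\Omega^1BA\to\Omega^1BA_\natural$ is $\theta(\alpha\otimes a\otimes\beta)=\eta(\alpha)\,a\otimes\beta$ (a left inverse of the inclusion).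 The connection $\nabla:\Omega^2BA\to\Omega^1BA$ is supported on $BA\otimes\bar BA\otimes A$ and given by $\nabla(\beta\otimes\alpha\otimes a)=\alpha\otimes a\otimes\beta$ for $\beta\in BA$, $\alpha\in\bar BA$, $a\in A$. Special deformation retract: chain maps $L\xrightarrow{i}M\xrightarrow{r}L$ and an odd map $h:M\to M$ with $ri=1_L$, $ir=1_M+\partial h+h\partial$, $hi=0$. *)

theory Defs
  imports Main "HOL-Library.Product_Plus" "HOL-Library.Function_Algebras"
begin

text \<open>
  The associative algebra A is
  given by a basis, indexed by the type 'b (every vector space over a field has a basis),
  and by its structure constants: the product of basis elements x and y is
  sum over z of (alg_mult x y z) times z.  Consequently A^{\<otimes> n} is the free
  'k-vector space on the words of length n over 'b, BA on all words, and
  Omega^n BA = BA \<otimes> \<bar>BA^{\<otimes> n} is the free vector space on lists [w0,w1,...,wn]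
  of words with w1,...,wn nonempty.  All spaces of universal codifferential forms
  are represented uniformly as finitely supported functions on 'b list list.
\<close>

type_synonym ('b, 'k) form = "'b list list \<Rightarrow> 'k"

definition supp_fn :: "('a \<Rightarrow> 'k::zero) \<Rightarrow> 'a set" where
  "supp_fn f = {x. f x \<noteq> 0}"

definition assoc_algebra :: "('b \<Rightarrow> 'b \<Rightarrow> 'b \<Rightarrow> 'k::field) \<Rightarrow> bool" where
  "assoc_algebra m \<longleftrightarrow>
     (\<forall>x y. finite {z. m x y z \<noteq> 0}) \<and>
     (\<forall>x y z v. (\<Sum>w\<in>{w. m x y w \<noteq> 0}. m x y w * m w z v)
              = (\<Sum>w\<in>{w. m y z w \<noteq> 0}. m y z w * m x w v))"

definition valid_idx :: "'b list list \<Rightarrow> bool" where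
  "valid_idx y \<longleftrightarrow> (\<forall>i. 1 \<le> i \<and> i < length y \<longrightarrow> y ! i \<noteq> [])"

definition Omega :: "nat \<Rightarrow> ('b, 'k::zero) form set" where
  "Omega n = {f. finite (supp_fn f) \<and>
                 (\<forall>y. f y \<noteq> 0 \<longrightarrow> length y = Suc n \<and> valid_idx y)}"

definition merge_at :: "nat \<Rightarrow> 'b list list \<Rightarrow> 'b list list" where
  "merge_at i y = take i y @ [y ! i @ y ! Suc i] @ drop (Suc (Suc i)) y"

text \<open>The Hochschild-type operator b : Omega^n -> Omega^(n+1), the transpose (coalgebra dual)
  of the Cuntz--Quillen b.  On basis elements:
  b(c0|c1|...|cn) = sum_{i=0}^n (-1)^i (c0|..|c_i'|c_i''|..|cn) + (-1)^(n+1) (c0''|c1|..|cn|c0'),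
  using the deconcatenation coproduct (reduced where the factor must lie in the augmentation
  coideal).\<close>
definition bop :: "('b, 'k::comm_ring_1) form \<Rightarrow> ('b, 'k) form" where
  "bop f y =
     (if valid_idx y \<and> 2 \<le> length y then
        (\<Sum>i<length y - 1. (-1) ^ i * f (merge_at i y))
        + (-1) ^ (length y - 1) * f ((last y @ hd y) # butlast (tl y))
      else 0)"

text \<open>The codifferential d : Omega^(n+1) -> Omega^n, d(c0|c1|...|c_{n+1}) = eta(c0) (c1|...|c_{n+1}),
  written coefficientwise.\<close>
definition dop :: "('b, 'k::zero) form \<Rightarrow> ('b, 'k) form" where
  "dop f y = (if valid_idx y \<and> y \<noteq> [] \<and> hd y \<noteq> [] then f ([] # y) else 0)"

definition Nop :: "('b, 'k::semiring_1) form \<Rightarrow> ('b, 'k) form" where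
  "Nop f y = of_nat (length y - 1) * f y"

text \<open>Cocommutator subspace Omega^n_natural (dual of Omega^n/[Omega,Omega]^n with
  [Omega,Omega] = b Omega + d b Omega), i.e. the kernel of b and of b d.\<close>
definition Omega_nat :: "nat \<Rightarrow> ('b, 'k::comm_ring_1) form set" where
  "Omega_nat n = {f \<in> Omega n. bop f = 0 \<and> bop (dop f) = 0}"

definition Omega_dot1 :: "('b, 'k::comm_ring_1) form set" where
  "Omega_dot1 = {f \<in> Omega 1.
      (\<lambda>g. bop g + dop (Nop g)) ((\<lambda>g. bop g + dop (Nop g)) f) = 0}"

text \<open>The canonical identification BA \<otimes> A \<otimes> BA \<cong> Omega^1 BA = BA \<otimes> \<bar>BA
  is alpha \<otimes> a \<otimes> beta \<mapsto> sum over alpha = alpha1 alpha2 of alpha1 | (alpha2 a beta)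
  (coproduct on the first factor, then concatenation); psi is its inverse
  psi(c0|c1) = c0 \<otimes> c1_1 \<otimes> (c1_2...) - sum_{c0 = c0' x} c0' \<otimes> x \<otimes> c1.\<close>
definition psi_inv :: "('b list \<times> 'b \<times> 'b list \<Rightarrow> 'k::comm_ring_1) \<Rightarrow> ('b, 'k) form" where
  "psi_inv u y =
     (if length y = 2 \<and> y ! 1 \<noteq> [] then
        (\<Sum>k<length (y ! 1). u (y ! 0 @ take k (y ! 1), y ! 1 ! k, drop (Suc k) (y ! 1)))
      else 0)"

definition psi :: "('b, 'k::comm_ring_1) form \<Rightarrow> ('b list \<times> 'b \<times> 'b list \<Rightarrow> 'k)" where
  "psi f = (\<lambda>(g, a, be). f [g, a # be] - (if be \<noteq> [] then f [g @ [a], be] else 0))"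

definition theta0 :: "('b list \<times> 'b \<times> 'b list \<Rightarrow> 'k::zero) \<Rightarrow> ('b \<times> 'b list \<Rightarrow> 'k)" where
  "theta0 u = (\<lambda>(a, be). u ([], a, be))"

text \<open>theta : Omega^1 BA \<rightarrow> Omega^1 BA_natural, where Omega^1 BA_natural is identified with
  A \<otimes> BA through theta itself (theta being a left inverse of the inclusion):
  theta(w) is the element of Omega^1_natural with the same image under theta_0 o psi.\<close>
definition theta :: "('b, 'k::comm_ring_1) form \<Rightarrow> ('b, 'k) form" where
  "theta f = (THE x. x \<in> Omega_nat 1 \<and> theta0 (psi x) = theta0 (psi f))"

text \<open>The connection nabla : Omega^2 BA \<rightarrow> Omega^1 BA, supported on BA \<otimes> \<bar>BA \<otimes> A,
  nabla(beta \<otimes> alpha \<otimes> a) = alpha \<otimes> a \<otimes> beta.\<close>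
definition nabla :: "('b, 'k::comm_ring_1) form \<Rightarrow> ('b, 'k) form" where
  "nabla f = psi_inv (\<lambda>(al, a, be). f [be, al, [a]])"

definition Xhat :: "(('b, 'k::comm_ring_1) form \<times> ('b, 'k) form) set" where
  "Xhat = Omega 0 \<times> Omega_nat 1"

definition X2hat :: "(('b, 'k::comm_ring_1) form \<times> ('b, 'k) form \<times> ('b, 'k) form) set" where
  "X2hat = {(w0, w2, w1). w0 \<in> Omega 0 \<and> w2 \<in> Omega_nat 2 \<and> w1 \<in> Omega_dot1}"

text \<open>The b-parts of the differentials: on X, C -b-> Omega^1_natural (the map back is d,
  which has no b-part); on X^2, b+2d has b-part omega0 \<mapsto> b omega0 and b+d has b-part
  omega1 \<mapsto> b omega1 \<in> Omega^2_natural.\<close>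
definition bX :: "('b, 'k::comm_ring_1) form \<times> ('b, 'k) form \<Rightarrow> ('b, 'k) form \<times> ('b, 'k) form" where
  "bX = (\<lambda>(w0, w1). (0, bop w0))"

definition bX2 :: "('b, 'k::comm_ring_1) form \<times> ('b, 'k) form \<times> ('b, 'k) form
                    \<Rightarrow> ('b, 'k) form \<times> ('b, 'k) form \<times> ('b, 'k) form" where
  "bX2 = (\<lambda>(w0, w2, w1). (0, bop w1, bop w0))"

definition i' :: "('b, 'k::comm_ring_1) form \<times> ('b, 'k) form \<Rightarrow> ('b, 'k) form \<times> ('b, 'k) form \<times> ('b, 'k) form" where
  "i' = (\<lambda>(w0, w1). (w0, 0, w1))"

definition r' :: "('b, 'k::comm_ring_1) form \<times> ('b, 'k) form \<times> ('b, 'k) form \<Rightarrow> ('b, 'k) form \<times> ('b, 'k) form" where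
  "r' = (\<lambda>(w0, w2, w1). (w0, theta w1))"

definition h' :: "('b, 'k::comm_ring_1) form \<times> ('b, 'k) form \<times> ('b, 'k) form \<Rightarrow> ('b, 'k) form \<times> ('b, 'k) form \<times> ('b, 'k) form" where
  "h' = (\<lambda>(w0, w2, w1). (0, 0, nabla w2))"

end

theory Submission
  imports Defs
begin


lemma valid_Cons: "valid_idx (a # ys) \<longleftrightarrow> [] \<notin> set ys"
  unfolding valid_idx_def
  by (auto simp: in_set_conv_nth)

lemma valid_Nil: "valid_idx []" by (simp add: valid_idx_def)

lemma Omega_zero: "f \<in> Omega n \<Longrightarrow> length y \<noteq> Suc n \<or> \<not> valid_idx y \<Longrightarrow> f y = 0"
  unfolding Omega_def by auto

lemma merge_at_0: "merge_at 0 (a # b # r) = (a @ b) # r"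
  by (simp add: merge_at_def)
lemma merge_at_Suc: "merge_at (Suc i) (a # r) = a # merge_at i r"
  by (simp add: merge_at_def)

lemma bop2: "bop f [a, b] = (if b \<noteq> [] then f [a @ b] - f [b @ a] else 0)"
  by (simp add: bop_def valid_Cons merge_at_0)

lemma bop3: "bop f [a, b, c] = (if b \<noteq> [] \<and> c \<noteq> [] then
     f [a @ b, c] - f [a, b @ c] + f [c @ a, b] else 0)"
  by (simp add: bop_def valid_Cons merge_at_0 merge_at_Suc eval_nat_numeral)

lemma bop4: "bop f [a, b, c, d] = (if b \<noteq> [] \<and> c \<noteq> [] \<and> d \<noteq> [] then
     f [a @ b, c, d] - f [a, b @ c, d] + f [a, b, c @ d] - f [d @ a, b, c] else 0)"
  by (simp add: bop_def valid_Cons merge_at_0 merge_at_Suc eval_nat_numeral)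

lemma dop_Cons: "dop f (a # r) = (if a \<noteq> [] \<and> [] \<notin> set r then f ([] # a # r) else 0)"
  by (simp add: dop_def valid_Cons)

lemma bop_len: "length y < 2 \<Longrightarrow> bop f y = 0" by (simp add: bop_def)

lemma bop_zero[simp]: "bop 0 = 0" by (rule ext) (simp add: bop_def)
lemma dop_zero[simp]: "dop 0 = 0" by (rule ext) (simp add: dop_def)
lemma Nop_zero[simp]: "Nop 0 = 0" by (rule ext) (simp add: Nop_def)

lemma bop_add: "bop (f + g) = bop f + bop g"
  by (rule ext) (simp add: bop_def sum.distrib algebra_simps)
lemma dop_add: "dop (f + (g::('b,'k::comm_ring_1) form)) = dop f + dop g"
  by (rule ext) (simp add: dop_def)
lemma Nop_add: "Nop (f + g) = Nop f + Nop g"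
  by (rule ext) (simp add: Nop_def algebra_simps)
lemma bop_smult: "bop (\<lambda>y. c * f y) = (\<lambda>y. c * bop f y)"
  by (rule ext) (simp add: bop_def sum_distrib_left algebra_simps)
lemma dop_smult: "dop (\<lambda>y. (c::'k::comm_ring_1) * f y) = (\<lambda>y. c * dop f y)"
  by (rule ext) (simp add: dop_def)

lemma len2: "length y = Suc (Suc 0) \<Longrightarrow> \<exists>a b. y = [a, b]"
  by (auto simp: length_Suc_conv)
lemma len3: "length y = Suc (Suc (Suc 0)) \<Longrightarrow> \<exists>a b c. y = [a, b, c]"
  by (auto simp: length_Suc_conv)
lemma len4: "length y = Suc (Suc (Suc (Suc 0))) \<Longrightarrow> \<exists>a b c d. y = [a, b, c, d]"
  by (auto simp: length_Suc_conv)

lemma fin_lists: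
  assumes "finite (S :: 'b list list set)"
  shows "finite {y::'b list list. length y \<le> N \<and> (\<exists>z\<in>S. set (concat y) \<subseteq> set (concat z) \<and> length (concat y) \<le> length (concat z))}"
proof -
  define A where "A = (\<Union>z\<in>S. set (concat z))"
  define M where "M = Max ((\<lambda>z. length (concat z)) ` S)"
  define C where "C = {c::'b list. set c \<subseteq> A \<and> length c \<le> M}"
  have fA: "finite A" using assms unfolding A_def by auto
  have fC: "finite C" unfolding C_def using finite_lists_length_le[OF fA] by simp
  have sub: "set y \<subseteq> C" if y: "z \<in> S" "set (concat y) \<subseteq> set (concat z)" "length (concat y) \<le> length (concat z)" for y z
  proof -
    have "length (concat z) \<le> M" unfolding M_def using assms y(1) by simp
    moreover have "set (concat z) \<subseteq> A" unfolding A_def using y(1) by auto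
    moreover have "\<And>c. c \<in> set y \<Longrightarrow> set c \<subseteq> set (concat y) \<and> length c \<le> length (concat y)"
      by (auto simp: length_concat intro: member_le_sum_list)
    ultimately show "set y \<subseteq> C" unfolding C_def using y by fastforce
  qed
  have "{y::'b list list. length y \<le> N \<and> (\<exists>z\<in>S. set (concat y) \<subseteq> set (concat z) \<and> length (concat y) \<le> length (concat z))}
     \<subseteq> {y. set y \<subseteq> C \<and> length y \<le> N}" using sub by blast
  then show ?thesis using finite_lists_length_le[OF fC, of N] by (rule finite_subset)
qed

lemma merge_split: "Suc i < length y \<Longrightarrow> y = take i y @ [y!i, y!Suc i] @ drop (Suc (Suc i)) y"
  by (metis Cons_nth_drop_Suc Suc_lessD append_Cons append_Nil append_take_drop_id)

lemma merge_len: "Suc i < length y \<Longrightarrow> length (merge_at i y) = length y - 1"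
  unfolding merge_at_def by simp

lemma merge_concat: "Suc i < length y \<Longrightarrow> concat (merge_at i y) = concat y"
  unfolding merge_at_def by (subst (3) merge_split) auto

lemma split3: "2 \<le> length y \<Longrightarrow> \<exists>a m l. y = a # m @ [l]"
  apply (cases y) apply simp
  subgoal for a r by (cases r rule: rev_cases) auto
  done

lemma rot_props: assumes "2 \<le> length y"
  shows "length ((last y @ hd y) # butlast (tl y)) = length y - 1"
    "set (concat ((last y @ hd y) # butlast (tl y))) = set (concat y)"
    "length (concat ((last y @ hd y) # butlast (tl y))) = length (concat y)"
  using split3[OF assms] by auto

lemma Omega_I: "finite (supp_fn f) \<Longrightarrow> (\<And>y. f y \<noteq> 0 \<Longrightarrow> length y = Suc n \<and> valid_idx y) \<Longrightarrow> f \<in> Omega n"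
  unfolding Omega_def by auto

lemma Omega_nz: "f \<in> Omega n \<Longrightarrow> f y \<noteq> 0 \<Longrightarrow> length y = Suc n \<and> valid_idx y"
  unfolding Omega_def by auto

lemma Omega_fin: "f \<in> Omega n \<Longrightarrow> finite (supp_fn f)"
  unfolding Omega_def by auto

lemma bop_nz: 
  assumes "bop f y \<noteq> 0"
  shows "valid_idx y \<and> 2 \<le> length y \<and> (\<exists>z. f z \<noteq> 0 \<and> length z = length y - 1 \<and> set (concat z) = set (concat y) \<and> length (concat z) = length (concat y))"
proof -
  have v: "valid_idx y" "2 \<le> length y" using assms unfolding bop_def by (simp_all split: if_split_asm)
  have "(\<Sum>i<length y - 1. (-1) ^ i * f (merge_at i y)) + (-1) ^ (length y - 1) * f ((last y @ hd y) # butlast (tl y)) \<noteq> 0"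
    using assms v unfolding bop_def by (simp only: if_True simp_thms)
  then have "(\<Sum>i<length y - 1. (-1) ^ i * f (merge_at i y)) \<noteq> 0 \<or> f ((last y @ hd y) # butlast (tl y)) \<noteq> 0"
    by (cases "f ((last y @ hd y) # butlast (tl y)) = 0") simp_all
  then show ?thesis
  proof
    assume "(\<Sum>i<length y - 1. (-1) ^ i * f (merge_at i y)) \<noteq> 0"
    then obtain i where i: "i \<in> {..<length y - 1}" "(-1) ^ i * f (merge_at i y) \<noteq> 0"
      by (rule sum.not_neutral_contains_not_neutral)
    then have "Suc i < length y" by simp
    note ml = merge_len[OF this] merge_concat[OF this]
    have "f (merge_at i y) \<noteq> 0" using i(2) by auto
    then show ?thesis using v ml by (intro conjI exI[of _ "merge_at i y"]) simp_all
  next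
    assume "f ((last y @ hd y) # butlast (tl y)) \<noteq> 0"
    then show ?thesis using v rot_props[OF v(2)] by (intro conjI exI[of _ "(last y @ hd y) # butlast (tl y)"]) simp_all
  qed
qed

lemma bop_Omega: assumes "f \<in> Omega n" shows "bop f \<in> Omega (Suc n)"
proof (rule Omega_I)
  fix y assume "bop f y \<noteq> 0"
  from bop_nz[OF this] obtain z where "valid_idx y" "2 \<le> length y" "f z \<noteq> 0" "length z = length y - 1" by blast
  then show "length y = Suc (Suc n) \<and> valid_idx y" using Omega_nz[OF assms, of z] by auto
next
  have "supp_fn (bop f) \<subseteq> {y. length y \<le> Suc (Suc n) \<and> (\<exists>z\<in>supp_fn f. set (concat y) \<subseteq> set (concat z) \<and> length (concat y) \<le> length (concat z))}"
  proof
    fix y assume "y \<in> supp_fn (bop f)"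
    then have "bop f y \<noteq> 0" by (simp add: supp_fn_def)
    from bop_nz[OF this] obtain z where z: "valid_idx y" "2 \<le> length y" "f z \<noteq> 0" "length z = length y - 1"
      "set (concat z) = set (concat y)" "length (concat z) = length (concat y)" by blast
    then show "y \<in> {y. length y \<le> Suc (Suc n) \<and> (\<exists>z\<in>supp_fn f. set (concat y) \<subseteq> set (concat z) \<and> length (concat y) \<le> length (concat z))}"
    proof -
      have zs: "z \<in> supp_fn f" by (simp add: supp_fn_def z(3))
      have "length z = Suc n" using Omega_nz[OF assms z(3)] by simp
      then have "length y \<le> Suc (Suc n)" using z(4) by simp
      then show ?thesis using z(5,6) by (intro CollectI conjI bexI[OF _ zs]) auto
    qed
  qed
  then show "finite (supp_fn (bop f))" by (rule finite_subset[OF _ fin_lists[OF Omega_fin[OF assms]]])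
qed

lemma dop_Omega: assumes "f \<in> Omega (Suc n)" shows "dop f \<in> Omega n"
proof (rule Omega_I)
  fix y assume "dop f y \<noteq> 0"
  then show "length y = Suc n \<and> valid_idx y" using Omega_zero[OF assms, of "[] # y"]
    by (auto simp: dop_def split: if_splits)
next
  have "supp_fn (dop f) \<subseteq> tl ` supp_fn f"
    by (auto simp: supp_fn_def dop_def split: if_splits intro!: image_eqI[where x="[] # _"])
  then show "finite (supp_fn (dop f))" by (rule finite_surj[OF Omega_fin[OF assms]])
qed

lemma nabla_nz: assumes "nabla f y \<noteq> 0"
  shows "\<exists>y0 y1 k. y = [y0, y1] \<and> y1 \<noteq> [] \<and> k < length y1 \<and> f [drop (Suc k) y1, y0 @ take k y1, [y1 ! k]] \<noteq> 0"
proof -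
  have l: "length y = 2 \<and> y ! 1 \<noteq> []" using assms unfolding nabla_def psi_inv_def by (simp split: if_split_asm)
  then have "length y = Suc (Suc 0)" by simp
  then obtain y0 y1 where y: "y = [y0, y1]" using len2 by blast
  have y1: "y1 \<noteq> []" using l y by simp
  have "(\<Sum>k<length y1. f [drop (Suc k) y1, y0 @ take k y1, [y1 ! k]]) \<noteq> 0"
    using assms y1 unfolding y nabla_def psi_inv_def by simp
  then obtain k where k: "k \<in> {..<length y1}" "f [drop (Suc k) y1, y0 @ take k y1, [y1 ! k]] \<noteq> 0"
    by (rule sum.not_neutral_contains_not_neutral)
  show ?thesis using y y1 k by auto
qed

lemma nabla_Omega: assumes "f \<in> Omega 2" shows "nabla f \<in> Omega 1"
proof (rule Omega_I)
  fix y assume "nabla f y \<noteq> 0"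
  from nabla_nz[OF this] obtain y0 y1 k where "y = [y0, y1]" "y1 \<noteq> []" by metis
  then show "length y = Suc 1 \<and> valid_idx y" by (simp add: valid_Cons)
next
  have "supp_fn (nabla f) \<subseteq> {y. length y \<le> 2 \<and> (\<exists>z\<in>supp_fn f. set (concat y) \<subseteq> set (concat z) \<and> length (concat y) \<le> length (concat z))}"
  proof
    fix y assume "y \<in> supp_fn (nabla f)"
    then have "nabla f y \<noteq> 0" by (simp add: supp_fn_def)
    from nabla_nz[OF this] obtain y0 y1 k where k: "y = [y0, y1]" "k < length y1"
      "f [drop (Suc k) y1, y0 @ take k y1, [y1 ! k]] \<noteq> 0" by blast
    define z where "z = [drop (Suc k) y1, y0 @ take k y1, [y1 ! k]]"
    have e: "y1 = take k y1 @ y1 ! k # drop (Suc k) y1" using k(2) by (simp add: id_take_nth_drop)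
    have "set y1 = set (take k y1 @ y1 ! k # drop (Suc k) y1)"
      by (rule arg_cong[OF e])
    then have "set y1 = set (take k y1) \<union> {y1 ! k} \<union> set (drop (Suc k) y1)" by simp
    then have sz: "set (concat z) = set (concat y)" unfolding z_def k(1) by auto
    have lz: "length (concat z) = length (concat y)" unfolding z_def k(1) using k(2) by simp
    have zs: "z \<in> supp_fn f" using k(3) by (simp add: supp_fn_def z_def)
    show "y \<in> {y. length y \<le> 2 \<and> (\<exists>z\<in>supp_fn f. set (concat y) \<subseteq> set (concat z) \<and> length (concat y) \<le> length (concat z))}"
      using sz lz k(1) by (intro CollectI conjI bexI[OF _ zs]) auto
  qed
  then show "finite (supp_fn (nabla f))" by (rule finite_subset[OF _ fin_lists[OF Omega_fin[OF assms]]])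
qed

lemma zero_Omega: "0 \<in> Omega n" unfolding Omega_def supp_fn_def by simp

lemma add_Omega: "(f::('b,'k::comm_ring_1) form) \<in> Omega n \<Longrightarrow> g \<in> Omega n \<Longrightarrow> f + g \<in> Omega n"
proof (rule Omega_I)
  assume f: "f \<in> Omega n" and g: "g \<in> Omega n"
  show "finite (supp_fn (f + g))"
    using Omega_fin[OF f] Omega_fin[OF g]
    by (auto simp: supp_fn_def intro: finite_subset[of _ "{y. f y \<noteq> 0} \<union> {y. g y \<noteq> 0}"])
  fix y assume "(f + g) y \<noteq> 0"
  then have "f y \<noteq> 0 \<or> g y \<noteq> 0" by auto
  then show "length y = Suc n \<and> valid_idx y" using Omega_nz[OF f] Omega_nz[OF g] by blast
qed

lemma Nop_Omega: assumes "(f::('b,'k::comm_ring_1) form) \<in> Omega n" shows "Nop f = (\<lambda>y. of_nat n * f y)"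
proof (rule ext)
  fix y show "Nop f y = of_nat n * f y"
  proof (cases "f y = 0")
    case True then show ?thesis by (simp add: Nop_def)
  next
    case False then have "length y = Suc n" using Omega_nz[OF assms] by blast
    then show ?thesis by (simp add: Nop_def)
  qed
qed

lemma Omega_eqI: "f \<in> Omega n \<Longrightarrow> g \<in> Omega n \<Longrightarrow> (\<And>y. length y = Suc n \<Longrightarrow> valid_idx y \<Longrightarrow> f y = g y) \<Longrightarrow> f = g"
  by (rule ext) (metis Omega_zero)

lemma bop_bop0: assumes "(f::('b,'k::comm_ring_1) form) \<in> Omega 0" shows "bop (bop f) = 0"
proof (rule Omega_eqI[of _ "Suc (Suc 0)"])
  show "bop (bop f) \<in> Omega (Suc (Suc 0))" using bop_Omega[OF bop_Omega[OF assms]] .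
  show "0 \<in> Omega (Suc (Suc 0))" by (rule zero_Omega)
  fix y :: "'b list list" assume l: "length y = Suc (Suc (Suc 0))" and v: "valid_idx y"
  obtain a b c where y: "y = [a, b, c]" using len3[OF l] by blast
  have bc: "b \<noteq> []" "c \<noteq> []" using v unfolding y by (auto simp: valid_Cons)
  show "bop (bop f) y = 0 y" unfolding y using bc by (simp add: bop3 bop2)
qed

lemma bop_bop1: assumes "(f::('b,'k::comm_ring_1) form) \<in> Omega 1" shows "bop (bop f) = 0"
proof (rule Omega_eqI[of _ "Suc (Suc (Suc 0))"])
  show "bop (bop f) \<in> Omega (Suc (Suc (Suc 0)))" using bop_Omega[OF bop_Omega[OF assms]] by simp
  show "0 \<in> Omega (Suc (Suc (Suc 0)))" by (rule zero_Omega)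
  fix y :: "'b list list" assume l: "length y = Suc (Suc (Suc (Suc 0)))" and v: "valid_idx y"
  obtain a b c d where y: "y = [a, b, c, d]" using len4[OF l] by blast
  have bc: "b \<noteq> []" "c \<noteq> []" "d \<noteq> []" using v unfolding y by (auto simp: valid_Cons)
  show "bop (bop f) y = 0 y" unfolding y using bc by (simp add: bop4 bop3)
qed

lemma dop_bop0: assumes "(f::('b,'k::comm_ring_1) form) \<in> Omega 0" shows "dop (bop f) = 0"
proof (rule Omega_eqI[of _ 0])
  show "dop (bop f) \<in> Omega 0" using dop_Omega[OF bop_Omega[OF assms]] .
  show "0 \<in> Omega 0" by (rule zero_Omega)
  fix y :: "'b list list" assume "length y = Suc 0" "valid_idx y"
  then obtain a where y: "y = [a]" by (auto simp: length_Suc_conv)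
  show "dop (bop f) y = 0 y" using y by (simp add: dop_Cons bop2)
qed




lemma smult_Omega: assumes "(f::('b,'k::comm_ring_1) form) \<in> Omega n" shows "(\<lambda>y. c * f y) \<in> Omega n"
proof (rule Omega_I)
  have "supp_fn (\<lambda>y. c * f y) \<subseteq> supp_fn f" by (auto simp: supp_fn_def)
  then show "finite (supp_fn (\<lambda>y. c * f y))" using Omega_fin[OF assms] by (rule finite_subset)
  fix y assume "c * f y \<noteq> 0" then have "f y \<noteq> 0" by auto
  then show "length y = Suc n \<and> valid_idx y" using Omega_nz[OF assms] by blast
qed

lemma O2_vanish: assumes "f \<in> Omega (Suc (Suc 0))"
  shows "f [a, [], c] = 0" "f [a, b, []] = 0"
  using Omega_zero[OF assms] by (auto simp: valid_Cons)

lemma cocycle: assumes "bop f = 0" "b \<noteq> []" "c \<noteq> []" "d \<noteq> []"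
  shows "f [a @ b, c, d] - f [a, b @ c, d] + f [a, b, c @ d] - f [d @ a, b, c] = 0"
  using fun_cong[OF assms(1), of "[a, b, c, d]"] assms(2-4) by (simp add: bop4)

lemma Ganti: assumes "bop (dop f) = 0" "u \<noteq> []" "v \<noteq> []"
  shows "f [[], u, v] + f [[], v, u] = 0"
  using fun_cong[OF assms(1), of "[[], u, v]"] assms(2-3) by (simp add: bop3 dop_Cons)

lemma Gcyc: assumes "bop (dop f) = 0" "a \<noteq> []" "b \<noteq> []" "c \<noteq> []"
  shows "f [[], a @ b, c] - f [[], a, b @ c] + f [[], c @ a, b] = 0"
  using fun_cong[OF assms(1), of "[a, b, c]"] assms(2-4) by (simp add: bop3 dop_Cons)

fun Nv :: "('b, 'k::comm_ring_1) form \<Rightarrow> 'b list \<Rightarrow> 'b list \<Rightarrow> 'b list \<Rightarrow> 'k" where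
  "Nv f s y0 [] = 0"
| "Nv f s y0 (e # u) = f [u @ s, y0, [e]] + Nv f s (y0 @ [e]) u"

lemma Nv_sum: "(\<Sum>k<length u. f [drop (Suc k) u @ s, y0 @ take k u, [u ! k]]) = Nv f s y0 u"
proof (induction u arbitrary: y0)
  case Nil then show ?case by simp
next
  case (Cons e u)
  show ?case unfolding length_Cons sum.lessThan_Suc_shift using Cons[of "y0 @ [e]"] by simp
qed

lemma nabla2: "y1 \<noteq> [] \<Longrightarrow> nabla f [y0, y1] = Nv f [] y0 y1"
  using Nv_sum[of f y1 "[]" y0] by (simp add: nabla_def psi_inv_def)

lemma Nv_app: "Nv f s y0 (u @ v) = Nv f (v @ s) y0 u + Nv f s (y0 @ u) v"
  by (induction u arbitrary: y0) (simp_all add: algebra_simps)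

lemma lin0: "(x::'a::ab_group_add) - y = z \<Longrightarrow> z = 0 \<Longrightarrow> x = y" by simp

lemma Tlem: assumes "bop f = 0" "f \<in> Omega (Suc (Suc 0))"
  shows "Nv f [] (c2 @ c0) c1 - Nv f c2 c0 c1 = f [[], c2, c0 @ c1] - f [c1, c2, c0]"
proof (induction c1 arbitrary: c0)
  case Nil then show ?case by simp
next
  case (Cons e u)
  have IH: "Nv f [] (c2 @ c0 @ [e]) u - Nv f c2 (c0 @ [e]) u = f [[], c2, c0 @ e # u] - f [u, c2, c0 @ [e]]"
    using Cons[of "c0 @ [e]"] by simp
  have key: "f [u, c2 @ c0, [e]] - f [u @ c2, c0, [e]] - f [u, c2, c0 @ [e]] + f [e # u, c2, c0] = 0"
  proof (cases "c2 = [] \<or> c0 = []")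
    case True then show ?thesis using O2_vanish[OF assms(2)] by auto
  next
    case False
    then show ?thesis using cocycle[OF assms(1), of c2 c0 "[e]" u] by (simp add: algebra_simps)
  qed
  show ?case
    apply (rule lin0[where z="(Nv f [] (c2 @ c0 @ [e]) u - Nv f c2 (c0 @ [e]) u - (f [[], c2, c0 @ e # u] - f [u, c2, c0 @ [e]]))
       + (f [u, c2 @ c0, [e]] - f [u @ c2, c0, [e]] - f [u, c2, c0 @ [e]] + f [e # u, c2, c0])"])
    subgoal by (simp add: algebra_simps)
    subgoal using IH key by simp
    done
qed

lemma Onat2D: assumes "f \<in> Omega_nat 2"
  shows "f \<in> Omega (Suc (Suc 0))" "bop f = 0" "bop (dop f) = 0"
  using assms by (simp_all add: Omega_nat_def numeral_2_eq_2)

lemma cyc3: assumes "f \<in> Omega_nat 2" "c1 \<noteq> []" "c2 \<noteq> []"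
  shows "f [c0, c1, c2] + f [[], c2, c0 @ c1] - f [c1, c2, c0] = 0"
proof (cases "c0 = []")
  case True
  then show ?thesis using Ganti[OF Onat2D(3)[OF assms(1)] assms(2,3)] O2_vanish[OF Onat2D(1)[OF assms(1)]] by simp
next
  case False
  have h1: "f [c1, c2, c0] - f [[], c1 @ c2, c0] + f [[], c1, c2 @ c0] - f [c0, c1, c2] = 0"
    using cocycle[OF Onat2D(2)[OF assms(1)] assms(2,3) False, of "[]"] by simp
  have h2: "f [[], c2 @ c0, c1] - f [[], c2, c0 @ c1] + f [[], c1 @ c2, c0] = 0"
    using Gcyc[OF Onat2D(3)[OF assms(1)] assms(3) False assms(2)] by simp
  have h3: "f [[], c1, c2 @ c0] + f [[], c2 @ c0, c1] = 0"
    using Ganti[OF Onat2D(3)[OF assms(1)] assms(2)] assms(3) by simp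
  show ?thesis
    apply (rule lin0[where z="(f [[], c1, c2 @ c0] + f [[], c2 @ c0, c1])
      - (f [c1, c2, c0] - f [[], c1 @ c2, c0] + f [[], c1, c2 @ c0] - f [c0, c1, c2])
      - (f [[], c2 @ c0, c1] - f [[], c2, c0 @ c1] + f [[], c1 @ c2, c0])"])
    subgoal by (simp add: algebra_simps)
    subgoal using h1 h2 h3 by simp
    done
qed

lemma nabla_Omega': "f \<in> Omega (Suc (Suc 0)) \<Longrightarrow> nabla f \<in> Omega (Suc 0)"
  using nabla_Omega[of f] by (simp add: numeral_2_eq_2)

lemma N1: fixes f :: "('b, 'k::comm_ring_1) form" assumes "f \<in> Omega_nat 2" shows "f + bop (nabla f) = 0"
proof (rule Omega_eqI[of _ "Suc (Suc 0)"])
  note O = Onat2D[OF assms]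
  show "f + bop (nabla f) \<in> Omega (Suc (Suc 0))"
    by (rule add_Omega[OF O(1) bop_Omega[OF nabla_Omega'[OF O(1)]]])
  show "0 \<in> Omega (Suc (Suc 0))" by (rule zero_Omega)
  fix y :: "'b list list" assume l: "length y = Suc (Suc (Suc 0))" and v: "valid_idx y"
  obtain c0 c1 c2 where y: "y = [c0, c1, c2]" using len3[OF l] by blast
  have c: "c1 \<noteq> []" "c2 \<noteq> []" using v unfolding y by (auto simp: valid_Cons)
  have ne12: "c1 @ c2 \<noteq> []" using c by simp
  have "bop (nabla f) [c0, c1, c2] = nabla f [c0 @ c1, c2] - nabla f [c0, c1 @ c2] + nabla f [c2 @ c0, c1]"
    using c by (simp add: bop3)
  also have "\<dots> = Nv f [] (c0 @ c1) c2 - Nv f [] c0 (c1 @ c2) + Nv f [] (c2 @ c0) c1"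
    using c unfolding nabla2[of c2 f "c0 @ c1", OF c(2)] nabla2[of "c1 @ c2" f c0, OF ne12] nabla2[of c1 f "c2 @ c0", OF c(1)] by simp
  also have "Nv f [] c0 (c1 @ c2) = Nv f c2 c0 c1 + Nv f [] (c0 @ c1) c2"
    using Nv_app[of f "[]" c0 c1 c2] by simp
  finally have e1: "bop (nabla f) [c0, c1, c2] = Nv f [] (c2 @ c0) c1 - Nv f c2 c0 c1"
    by simp
  have e2: "Nv f [] (c2 @ c0) c1 - Nv f c2 c0 c1 = f [[], c2, c0 @ c1] - f [c1, c2, c0]"
    by (rule Tlem[OF O(2) O(1)])
  have e3: "f [c0, c1, c2] + f [[], c2, c0 @ c1] - f [c1, c2, c0] = 0"
    by (rule cyc3[OF assms c])
  show "(f + bop (nabla f)) y = 0 y" unfolding y plus_fun_apply e1 e2 zero_fun_apply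
    using e3 by (simp add: add_diff_eq)
qed

lemma dop_nabla: fixes f :: "('b, 'k::comm_ring_1) form" assumes "f \<in> Omega_nat 2" shows "bop (dop (nabla f)) = (\<lambda>y. 2 * dop f y)"
proof (rule Omega_eqI[of _ "Suc 0"])
  note O = Onat2D[OF assms]
  show "bop (dop (nabla f)) \<in> Omega (Suc 0)"
    by (rule bop_Omega[OF dop_Omega[OF nabla_Omega'[OF O(1)]]])
  show "(\<lambda>y. 2 * dop f y) \<in> Omega (Suc 0)"
    by (rule smult_Omega[OF dop_Omega[OF O(1)]])
  fix y :: "'b list list" assume l: "length y = Suc (Suc 0)" and v: "valid_idx y"
  obtain c0 c1 where y: "y = [c0, c1]" using len2[OF l] by blast
  have c: "c1 \<noteq> []" using v unfolding y by (auto simp: valid_Cons)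
  have ne: "c0 @ c1 \<noteq> []" "c1 @ c0 \<noteq> []" using c by auto
  have "bop (dop (nabla f)) [c0, c1] = dop (nabla f) [c0 @ c1] - dop (nabla f) [c1 @ c0]"
    using c by (simp add: bop2)
  also have "\<dots> = nabla f [[], c0 @ c1] - nabla f [[], c1 @ c0]"
    using ne by (simp add: dop_Cons)
  also have "\<dots> = Nv f [] [] (c0 @ c1) - Nv f [] [] (c1 @ c0)"
    unfolding nabla2[of "c0 @ c1" f "[]", OF ne(1)] nabla2[of "c1 @ c0" f "[]", OF ne(2)] ..
  also have "\<dots> = (Nv f c1 [] c0 + Nv f [] c0 c1) - (Nv f c0 [] c1 + Nv f [] c1 c0)"
    using Nv_app[of f "[]" "[]" c0 c1] Nv_app[of f "[]" "[]" c1 c0] by simp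
  finally have e1: "bop (dop (nabla f)) [c0, c1] = (Nv f [] c0 c1 - Nv f c0 [] c1) - (Nv f [] c1 c0 - Nv f c1 [] c0)"
    by simp
  have t1: "Nv f [] c0 c1 - Nv f c0 [] c1 = f [[], c0, c1]"
    using Tlem[OF O(2) O(1), of c0 "[]" c1] O2_vanish[OF O(1)] by simp
  have t2: "Nv f [] c1 c0 - Nv f c1 [] c0 = f [[], c1, c0]"
    using Tlem[OF O(2) O(1), of c1 "[]" c0] O2_vanish[OF O(1)] by simp
  have E: "bop (dop (nabla f)) y = f [[], c0, c1] - f [[], c1, c0]" unfolding y e1 t1 t2 by (rule refl)
  show "bop (dop (nabla f)) y = 2 * dop f y"
  proof (cases "c0 = []")
    case True
    have "dop f [c0, c1] = 0" using True by (simp add: dop_Cons)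
    moreover have "f [[], c0, c1] = 0" "f [[], c1, c0] = 0" using True O2_vanish[OF O(1)] by simp_all
    ultimately show ?thesis using E by (simp add: y)
  next
    case False
    have h: "f [[], c1, c0] = - f [[], c0, c1]" using Ganti[OF O(3) False c] by (simp add: eq_neg_iff_add_eq_0 add.commute)
    have d: "dop f y = f [[], c0, c1]" using False c unfolding y by (simp add: dop_Cons)
    have "bop (dop (nabla f)) y = f [[], c0, c1] + f [[], c0, c1]" using E h by (metis diff_minus_eq_add)
    also have "\<dots> = 2 * dop f y" unfolding d by (rule mult_2[symmetric])
    finally show ?thesis .
  qed
qed

lemma T0: "theta0 (psi x) (a, be) = x [[], a # be] - (if be \<noteq> [] then x [[a], be] else 0)"
  by (simp add: theta0_def psi_def)

lemma t0p_nabla: assumes "\<And>a c. g [a, [], c] = 0" shows "theta0 (psi (nabla g)) = (\<lambda>_. 0)"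
proof (rule ext, clarify)
  fix a :: 'a and be :: "'a list"
  have n1: "nabla g [[], a # be] = Nv g [] [a] be"
    using nabla2[of "a # be" g "[]"] assms by simp
  show "theta0 (psi (nabla g)) (a, be) = 0"
  proof (cases "be = []")
    case True then show ?thesis unfolding T0 n1 by simp
  next
    case False then show ?thesis unfolding T0 n1 using nabla2[of be g "[a]", OF False] by simp
  qed
qed

lemma diff_Omega: assumes "(f::('b,'k::comm_ring_1) form) \<in> Omega n" "g \<in> Omega n" shows "(\<lambda>y. f y - g y) \<in> Omega n"
proof -
  have "(\<lambda>y. f y - g y) = f + (\<lambda>y. (-1) * g y)" by (rule ext) simp
  then show ?thesis using add_Omega[OF assms(1) smult_Omega[OF assms(2), of "-1"]] by simp
qed

lemma bop_diff: "bop (\<lambda>y. f y - g y) = (\<lambda>y. bop f y - bop g y)"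
  by (rule ext) (simp add: bop_def sum_subtractf algebra_simps)

lemma uniq: fixes x :: "('b, 'k::comm_ring_1) form"
  assumes O: "x \<in> Omega (Suc 0)" and b: "bop x = 0"
    and t: "\<And>a be. x [[], a # be] = (if be \<noteq> [] then x [[a], be] else 0)"
  shows "x = 0"
proof -
  have s1: "x [c, [a]] = 0" for c a
  proof (cases "c = []")
    case True then show ?thesis using t[of a "[]"] by simp
  next
    case False
    have "x [[a], c] - x [[], a # c] + x [c, [a]] = 0"
      using fun_cong[OF b, of "[[], [a], c]"] False by (simp add: bop3)
    then show ?thesis using t[of a c] False by simp
  qed
  have s2: "c1 \<noteq> [] \<Longrightarrow> x [c0, c1] = 0" for c0 c1
  proof (induction c1 arbitrary: c0 rule: rev_induct)
    case Nil then show ?case by simp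
  next
    case (snoc a u)
    show ?case
    proof (cases "u = []")
      case True then show ?thesis using s1 by simp
    next
      case False
      have "x [c0 @ u, [a]] - x [c0, u @ [a]] + x [[a] @ c0, u] = 0"
        using fun_cong[OF b, of "[c0, u, [a]]"] False by (simp add: bop3)
      then show ?thesis using s1[of "c0 @ u" a] snoc.IH[OF False, of "[a] @ c0"] by simp
    qed
  qed
  show ?thesis
  proof (rule Omega_eqI[OF O zero_Omega])
    fix y :: "'b list list" assume l: "length y = Suc (Suc 0)" and v: "valid_idx y"
    obtain c0 c1 where y: "y = [c0, c1]" using len2[OF l] by blast
    have c: "c1 \<noteq> []" using v unfolding y by (auto simp: valid_Cons)
    show "x y = 0 y" unfolding y using s2[OF c] by simp
  qed
qed

lemma sw: "(a::'a::ab_group_add) - b = c - e \<Longrightarrow> a - c = b - e"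
  by (simp add: algebra_simps)

lemma theta_eq: fixes t :: "('b, 'k::comm_ring_1) form"
  assumes tO: "t \<in> Omega_nat 1" and e: "theta0 (psi t) = theta0 (psi w)"
  shows "theta w = t"
  unfolding theta_def
proof (rule the_equality)
  show "t \<in> Omega_nat 1 \<and> theta0 (psi t) = theta0 (psi w)" using tO e by simp
next
  fix x assume xa: "x \<in> Omega_nat 1 \<and> theta0 (psi x) = theta0 (psi w)"
  have xO: "x \<in> Omega (Suc 0)" "bop x = 0" using xa by (simp_all add: Omega_nat_def)
  have tO': "t \<in> Omega (Suc 0)" "bop t = 0" using tO by (simp_all add: Omega_nat_def)
  define d where "d = (\<lambda>y. x y - t y)"
  have "d = 0"
  proof (rule uniq)
    show "d \<in> Omega (Suc 0)" unfolding d_def by (rule diff_Omega[OF xO(1) tO'(1)])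
    show "bop d = 0" unfolding d_def bop_diff xO(2) tO'(2) by (rule ext) simp
    fix a be
    have "theta0 (psi x) (a, be) = theta0 (psi t) (a, be)" using xa e by metis
    then have h: "x [[], a # be] - (if be \<noteq> [] then x [[a], be] else 0) = t [[], a # be] - (if be \<noteq> [] then t [[a], be] else 0)"
      unfolding T0 .
    show "d [[], a # be] = (if be \<noteq> [] then d [[a], be] else 0)"
    proof (cases "be = []")
      case True then show ?thesis using h unfolding d_def by simp
    next
      case False
      then have h': "x [[], a # be] - x [[a], be] = t [[], a # be] - t [[a], be]" using h by simp
      show ?thesis using sw[OF h'] False unfolding d_def by simp
    qed
  qed
  show "x = t"
  proof (rule ext)
    fix y have "d y = 0" using \<open>d = 0\<close> by simp
    then show "x y = t y" unfolding d_def by simp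
  qed
qed

lemma PP: fixes w :: "('b, 'k::comm_ring_1) form" assumes wO: "w \<in> Omega (Suc 0)"
  shows "(\<lambda>g. bop g + dop (Nop g)) ((\<lambda>g. bop g + dop (Nop g)) w) = bop (dop w) + (\<lambda>y. 2 * dop (bop w) y)"
proof -
  have n1: "Nop w = w" using Nop_Omega[OF wO] by simp
  have bO: "bop w \<in> Omega (Suc (Suc 0))" by (rule bop_Omega[OF wO])
  have dO: "dop w \<in> Omega 0" by (rule dop_Omega[OF wO])
  have n2: "Nop (bop w + dop w) = (\<lambda>y. 2 * bop w y)"
    unfolding Nop_add Nop_Omega[OF bO] Nop_Omega[OF dO] by (rule ext) simp
  have bb: "bop (bop w) = 0" using bop_bop1[of w] wO by simp
  have "(\<lambda>g. bop g + dop (Nop g)) ((\<lambda>g. bop g + dop (Nop g)) w) = bop (bop w + dop w) + dop (\<lambda>y. 2 * bop w y)"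
    unfolding n1 n2 ..
  also have "\<dots> = bop (dop w) + (\<lambda>y. 2 * dop (bop w) y)"
    unfolding bop_add bb dop_smult by simp
  finally show ?thesis .
qed

lemma dot_iff: fixes w :: "('b, 'k::comm_ring_1) form"
  shows "w \<in> Omega_dot1 \<longleftrightarrow> w \<in> Omega (Suc 0) \<and> bop (dop w) + (\<lambda>y. 2 * dop (bop w) y) = 0"
proof (cases "w \<in> Omega (Suc 0)")
  case True
  have "w \<in> Omega_dot1 \<longleftrightarrow> (\<lambda>g. bop g + dop (Nop g)) ((\<lambda>g. bop g + dop (Nop g)) w) = 0"
    using True unfolding Omega_dot1_def by simp
  then show ?thesis unfolding PP[OF True] using True by simp
next
  case False then show ?thesis unfolding Omega_dot1_def by simp
qed

lemma nat1_iff: "w \<in> Omega_nat 1 \<longleftrightarrow> w \<in> Omega (Suc 0) \<and> bop w = 0 \<and> bop (dop w) = 0"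
  by (simp add: Omega_nat_def)

lemma nat2_iff: "w \<in> Omega_nat 2 \<longleftrightarrow> w \<in> Omega (Suc (Suc 0)) \<and> bop w = 0 \<and> bop (dop w) = 0"
  by (simp add: Omega_nat_def numeral_2_eq_2)

lemma M1: fixes w0 :: "('b, 'k::comm_ring_1) form" assumes "w0 \<in> Omega 0" shows "bop w0 \<in> Omega_nat 1"
  unfolding nat1_iff using bop_Omega[OF assms] bop_bop0[OF assms] dop_bop0[OF assms] by simp

lemma M3: fixes w :: "('b, 'k::comm_ring_1) form" assumes "w \<in> Omega_nat 1" shows "w \<in> Omega_dot1"
proof -
  have h: "w \<in> Omega (Suc 0)" "bop w = 0" "bop (dop w) = 0" using assms unfolding nat1_iff by simp_all
  show ?thesis unfolding dot_iff h(2,3) dop_zero using h(1) by (intro conjI) (simp_all add: fun_eq_iff)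
qed

lemma M2: fixes w0 :: "('b, 'k::comm_ring_1) form" assumes "w0 \<in> Omega 0" shows "bop w0 \<in> Omega_dot1"
  by (rule M3[OF M1[OF assms]])

lemma M4: fixes w1 :: "('b, 'k::field_char_0) form" assumes "w1 \<in> Omega_dot1" shows "bop w1 \<in> Omega_nat 2"
proof -
  have h: "w1 \<in> Omega (Suc 0)" "bop (dop w1) + (\<lambda>y. 2 * dop (bop w1) y) = 0" using assms unfolding dot_iff by simp_all
  have e: "dop (bop w1) = (\<lambda>y. (- 1 / 2) * bop (dop w1) y)"
  proof (rule ext)
    fix y have "bop (dop w1) y + 2 * dop (bop w1) y = 0" using fun_cong[OF h(2), of y] by simp
    then show "dop (bop w1) y = (- 1 / 2) * bop (dop w1) y" by (simp add: field_simps) (metis add.commute add_eq_0_iff)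
  qed
  have "bop (dop (bop w1)) = 0" unfolding e bop_smult bop_bop0[OF dop_Omega[OF h(1)]] by (rule ext) simp
  then show ?thesis unfolding nat2_iff using bop_Omega[OF h(1)] bop_bop1[of w1] h(1) by simp
qed

lemma neg_dop: "(\<And>z. g z = - h z) \<Longrightarrow> dop g y = - (dop h y :: 'k::comm_ring_1)"
  by (simp add: dop_def)

lemma M5: fixes w2 :: "('b, 'k::comm_ring_1) form" assumes "w2 \<in> Omega_nat 2" shows "nabla w2 \<in> Omega_dot1"
proof -
  have O: "w2 \<in> Omega (Suc (Suc 0))" using assms unfolding nat2_iff by simp
  have n: "bop (nabla w2) z = - w2 z" for z using fun_cong[OF N1[OF assms], of z]
    by (simp add: eq_neg_iff_add_eq_0 add.commute)
  have "bop (dop (nabla w2)) + (\<lambda>y. 2 * dop (bop (nabla w2)) y) = 0"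
    unfolding dop_nabla[OF assms] by (rule ext) (simp add: neg_dop[OF n])
  then show ?thesis unfolding dot_iff using nabla_Omega'[OF O] by simp
qed

lemma M6: fixes w1 :: "('b, 'k::field_char_0) form" assumes "w1 \<in> Omega_dot1"
  shows "w1 + nabla (bop w1) \<in> Omega_nat 1" "theta0 (psi (w1 + nabla (bop w1))) = theta0 (psi w1)"
proof -
  have h: "w1 \<in> Omega (Suc 0)" "bop (dop w1) + (\<lambda>y. 2 * dop (bop w1) y) = 0" using assms unfolding dot_iff by simp_all
  have b2: "bop w1 \<in> Omega_nat 2" by (rule M4[OF assms])
  have bO: "bop w1 \<in> Omega (Suc (Suc 0))" by (rule bop_Omega[OF h(1)])
  have tO: "w1 + nabla (bop w1) \<in> Omega (Suc 0)" by (rule add_Omega[OF h(1) nabla_Omega'[OF bO]])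
  have bt: "bop (w1 + nabla (bop w1)) = 0" unfolding bop_add using N1[OF b2] .
  have bdt: "bop (dop (w1 + nabla (bop w1))) = 0" unfolding dop_add bop_add dop_nabla[OF b2] using h(2) .
  show "w1 + nabla (bop w1) \<in> Omega_nat 1" unfolding nat1_iff using tO bt bdt by simp
  show "theta0 (psi (w1 + nabla (bop w1))) = theta0 (psi w1)"
  proof (rule ext, clarify)
    fix a be
    have z: "theta0 (psi (nabla (bop w1))) (a, be) = 0" using t0p_nabla[of "bop w1"] O2_vanish[OF bO] by simp
    show "theta0 (psi (w1 + nabla (bop w1))) (a, be) = theta0 (psi w1) (a, be)"
      using z unfolding T0 by (cases "be = []") (simp_all add: algebra_simps)
  qed
qed

lemma theta_M: fixes w1 :: "('b, 'k::field_char_0) form" assumes "w1 \<in> Omega_dot1"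
  shows "theta w1 = w1 + nabla (bop w1)"
  by (rule theta_eq[OF M6(1)[OF assms] M6(2)[OF assms]])

lemma theta_id: fixes w :: "('b, 'k::comm_ring_1) form" assumes "w \<in> Omega_nat 1" shows "theta w = w"
  by (rule theta_eq[OF assms refl])

lemma nabla_zero: "nabla 0 = 0"
  by (rule ext) (simp add: nabla_def psi_inv_def)

lemma zero_nat2: "(0::('b, 'k::comm_ring_1) form) \<in> Omega_nat 2"
  unfolding nat2_iff by (simp add: zero_Omega)

lemma C1: "x \<in> (Xhat :: (('b, 'k::comm_ring_1) form \<times> ('b, 'k) form) set) \<Longrightarrow> bX x \<in> Xhat \<and> bX (bX x) = 0"
proof (cases x)
  case (Pair w0 w1)
  assume "x \<in> Xhat"
  then have w0: "w0 \<in> Omega 0" using Pair by (simp add: Xhat_def)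
  have "bX x = (0, bop w0)" unfolding Pair bX_def by simp
  moreover have "bX (0, bop w0) = 0" unfolding bX_def by (simp add: zero_prod_def)
  ultimately show ?thesis using M1[OF w0] zero_Omega by (simp add: Xhat_def)
qed

lemma C2: "y \<in> (X2hat :: (('b, 'k::field_char_0) form \<times> ('b, 'k) form \<times> ('b, 'k) form) set) \<Longrightarrow> bX2 y \<in> X2hat \<and> bX2 (bX2 y) = 0"
proof (cases y)
  case (fields w0 w2 w1)
  assume "y \<in> X2hat"
  then have w: "w0 \<in> Omega 0" "w2 \<in> Omega_nat 2" "w1 \<in> Omega_dot1" using fields by (simp_all add: X2hat_def)
  have "bX2 y = (0, bop w1, bop w0)" unfolding fields bX2_def by simp
  moreover have "bX2 (0, bop w1, bop w0) = 0" unfolding bX2_def by (simp add: zero_prod_def bop_bop0[OF w(1)])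
  ultimately show ?thesis using M4[OF w(3)] M2[OF w(1)] zero_Omega by (simp add: X2hat_def)
qed

lemma C3: "x \<in> (Xhat :: (('b, 'k::comm_ring_1) form \<times> ('b, 'k) form) set) \<Longrightarrow> i' x \<in> X2hat \<and> i' (bX x) = bX2 (i' x)"
proof (cases x)
  case (Pair w0 w1)
  assume "x \<in> Xhat"
  then have w: "w0 \<in> Omega 0" "w1 \<in> Omega_nat 1" using Pair by (simp_all add: Xhat_def)
  have b1: "bop w1 = 0" using w(2) unfolding nat1_iff by simp
  show ?thesis unfolding Pair i'_def bX_def bX2_def using w M3[OF w(2)] zero_nat2 b1 by (simp add: X2hat_def)
qed

lemma C4: "y \<in> (X2hat :: (('b, 'k::field_char_0) form \<times> ('b, 'k) form \<times> ('b, 'k) form) set) \<Longrightarrow>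
   r' y \<in> Xhat \<and> h' y \<in> X2hat \<and> r' (bX2 y) = bX (r' y)"
proof (cases y)
  case (fields w0 w2 w1)
  assume "y \<in> X2hat"
  then have w: "w0 \<in> Omega 0" "w2 \<in> Omega_nat 2" "w1 \<in> Omega_dot1" using fields by (simp_all add: X2hat_def)
  have t: "theta w1 \<in> Omega_nat 1" unfolding theta_M[OF w(3)] by (rule M6(1)[OF w(3)])
  have t0: "theta (bop w0) = bop w0" by (rule theta_id[OF M1[OF w(1)]])
  have z: "(0::('b, 'k) form) \<in> Omega 0" "(0::('b, 'k) form) \<in> Omega_nat 2" by (rule zero_Omega, rule zero_nat2)
  show ?thesis unfolding fields r'_def h'_def bX_def bX2_def
    using w t t0 M5[OF w(2)] z by (simp add: Xhat_def X2hat_def)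
qed

lemma C5: "x \<in> (Xhat :: (('b, 'k::comm_ring_1) form \<times> ('b, 'k) form) set) \<Longrightarrow> r' (i' x) = x \<and> h' (i' x) = 0"
proof (cases x)
  case (Pair w0 w1)
  assume "x \<in> Xhat"
  then have w: "w0 \<in> Omega 0" "w1 \<in> Omega_nat 1" using Pair by (simp_all add: Xhat_def)
  show ?thesis unfolding Pair i'_def r'_def h'_def using theta_id[OF w(2)] by (simp add: nabla_zero zero_prod_def)
qed

lemma C6: "y \<in> (X2hat :: (('b, 'k::field_char_0) form \<times> ('b, 'k) form \<times> ('b, 'k) form) set) \<Longrightarrow>
   i' (r' y) = y + bX2 (h' y) + h' (bX2 y)"
proof (cases y)
  case (fields w0 w2 w1)
  assume "y \<in> X2hat"
  then have w: "w0 \<in> Omega 0" "w2 \<in> Omega_nat 2" "w1 \<in> Omega_dot1" using fields by (simp_all add: X2hat_def)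
  have "i' (r' y) = (w0, 0, w1 + nabla (bop w1))" unfolding fields i'_def r'_def using theta_M[OF w(3)] by simp
  moreover have "y + bX2 (h' y) + h' (bX2 y) = (w0, w2 + bop (nabla w2), w1 + nabla (bop w1))"
    unfolding fields i'_def h'_def bX2_def by simp
  ultimately show ?thesis using N1[OF w(2)] by simp
qed


theorem lemma3:
  fixes m :: "'b \<Rightarrow> 'b \<Rightarrow> 'b \<Rightarrow> 'k::field_char_0"
  assumes "assoc_algebra m"
  shows
    \<comment> \<open>the two b-supercomplexes are well defined\<close>
    "(\<forall>x \<in> (Xhat :: (('b, 'k) form \<times> ('b, 'k) form) set). bX x \<in> Xhat \<and> bX (bX x) = 0)
     \<and> (\<forall>y \<in> (X2hat :: (('b, 'k) form \<times> ('b, 'k) form \<times> ('b, 'k) form) set).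
          bX2 y \<in> X2hat \<and> bX2 (bX2 y) = 0)
     \<comment> \<open>i', r', h' are well defined, i' and r' are chain maps\<close>
     \<and> (\<forall>x \<in> (Xhat :: (('b, 'k) form \<times> ('b, 'k) form) set). i' x \<in> X2hat \<and> i' (bX x) = bX2 (i' x))
     \<and> (\<forall>y \<in> (X2hat :: (('b, 'k) form \<times> ('b, 'k) form \<times> ('b, 'k) form) set).
          r' y \<in> Xhat \<and> h' y \<in> X2hat \<and> r' (bX2 y) = bX (r' y))
     \<comment> \<open>special deformation retract identities\<close>
     \<and> (\<forall>x \<in> (Xhat :: (('b, 'k) form \<times> ('b, 'k) form) set). r' (i' x) = x \<and> h' (i' x) = 0)
     \<and> (\<forall>y \<in> (X2hat :: (('b, 'k) form \<times> ('b, 'k) form \<times> ('b, 'k) form) set).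
          i' (r' y) = y + bX2 (h' y) + h' (bX2 y))"
proof (intro conjI)
  show "\<forall>x \<in> (Xhat :: (('b, 'k) form \<times> ('b, 'k) form) set). bX x \<in> Xhat \<and> bX (bX x) = 0"
    using C1 by (intro ballI)
  show "\<forall>y \<in> (X2hat :: (('b, 'k) form \<times> ('b, 'k) form \<times> ('b, 'k) form) set). bX2 y \<in> X2hat \<and> bX2 (bX2 y) = 0"
    using C2 by (intro ballI)
  show "\<forall>x \<in> (Xhat :: (('b, 'k) form \<times> ('b, 'k) form) set). i' x \<in> X2hat \<and> i' (bX x) = bX2 (i' x)"
    using C3 by (intro ballI)
  show "\<forall>y \<in> (X2hat :: (('b, 'k) form \<times> ('b, 'k) form \<times> ('b, 'k) form) set). r' y \<in> Xhat \<and> h' y \<in> X2hat \<and> r' (bX2 y) = bX (r' y)"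
    using C4 by (intro ballI)
  show "\<forall>x \<in> (Xhat :: (('b, 'k) form \<times> ('b, 'k) form) set). r' (i' x) = x \<and> h' (i' x) = 0"
    using C5 by (intro ballI)
  show "\<forall>y \<in> (X2hat :: (('b, 'k) form \<times> ('b, 'k) form \<times> ('b, 'k) form) set). i' (r' y) = y + bX2 (h' y) + h' (bX2 y)"
    using C6 by (intro ballI)
qed

end
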